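(* Let $(f,p)$ be a mechanism with $f_1(v,k)=k f_2(v,k)$ for all $(v,k)\in V\times K$. Then $(f,p)$ is incentive compatible if and only if for every $(v,k)\in V\times K$: (1) $f_2(v,k)\le f_2(v',k)$ for all $v'>v$ in $V$; (2) $p(v,k)=p(0,1)+v f_2(v,k)-\int_0^v f_2(t,k)\,dt$; (3) $\int_0^v f_2(t,k')\,dt\le\int_0^v f_2(t,k)\,dt$ for all $k'>k$ in $K$; (4) $\int_0^{vk/k'} f_2(t,k)\,dt\le\int_0^v f_2(t,k')\,dt$ for all $k'>k$ in $K$.
   Context: An agent has private type $(v,k)\in V\times K$, $V=[0,1]$, $K=(0,1]$, and from an outcome $(a_1,a_2,t)$ with $a_1,a_2\in[0,1]$ (quantities of two divisible goods) and $t\in\mathbb{R}$ (payment by the agent) gets utility $U_{(v,k)}(a_1,a_2,t)=v\min\{a_1/k,a_2\}-t$. A mechanism is a pair $(f,p)$ with $f=(f_1,f_2):V\times K\to[0,1]^2$, $p:V\times K\to\mathbb{R}$. It is incentive compatible if $U_{(v,k)}(f(v,k),p(v,k))\ge U_{(v,k)}(f(v',k'),p(v',k'))$ for all types $(v,k),(v',k')$. *)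

theory Defs
  imports "HOL-Analysis.Analysis"
begin

definition typesV :: "real set" where "typesV = {0..1}"
definition typesK :: "real set" where "typesK = {0<..1}"

definition utility :: "real \<Rightarrow> real \<Rightarrow> real \<Rightarrow> real \<Rightarrow> real \<Rightarrow> real" where
  "utility v k a1 a2 t = v * min (a1 / k) a2 - t"

definition mechanism :: "(real \<Rightarrow> real \<Rightarrow> real) \<Rightarrow> (real \<Rightarrow> real \<Rightarrow> real) \<Rightarrow> bool" where
  "mechanism f1 f2 = (\<forall>v\<in>typesV. \<forall>k\<in>typesK. f1 v k \<in> {0..1} \<and> f2 v k \<in> {0..1})"

definition incentive_compatible ::
  "(real \<Rightarrow> real \<Rightarrow> real) \<Rightarrow> (real \<Rightarrow> real \<Rightarrow> real) \<Rightarrow> (real \<Rightarrow> real \<Rightarrow> real) \<Rightarrow> bool" where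
  "incentive_compatible f1 f2 p =
    (\<forall>v\<in>typesV. \<forall>k\<in>typesK. \<forall>v'\<in>typesV. \<forall>k'\<in>typesK.
       utility v k (f1 v k) (f2 v k) (p v k) \<ge> utility v k (f1 v' k') (f2 v' k') (p v' k'))"

end

theory Submission
  imports Defs
begin

lemma int_diff_ge:
  fixes h :: "real \<Rightarrow> real"
  assumes mono: "mono_on {0..1} h" and a: "a \<in> {0..1}" and b: "b \<in> {0..1}"
  shows "integral {0..b} h - integral {0..a} h \<ge> (b - a) * h a"
proof (cases "a \<le> b")
  case True
  have i: "h integrable_on {0..b}"
    by (rule integrable_on_mono_on) (use mono b in \<open>auto intro: mono_on_subset\<close>)
  have "integral {0..a} h + integral {a..b} h = integral {0..b} h"
    using Henstock_Kurzweil_Integration.integral_combine[OF _ True i] a by auto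
  moreover have "h integrable_on {a..b}"
    using integrable_subinterval_real[OF i] a by auto
  moreover have "integral {a..b} (\<lambda>_. h a) \<le> integral {a..b} h"
    apply (rule integral_le)
    using \<open>h integrable_on {a..b}\<close> apply auto
    using mono a b by (auto intro!: mono_onD[OF mono])
  ultimately show ?thesis using True by (simp add: mult.commute)
next
  case False
  have i: "h integrable_on {0..a}"
    by (rule integrable_on_mono_on) (use mono a in \<open>auto intro: mono_on_subset\<close>)
  have "integral {0..b} h + integral {b..a} h = integral {0..a} h"
    using Henstock_Kurzweil_Integration.integral_combine[OF _ _ i, of b] b False by auto
  moreover have "h integrable_on {b..a}"
    using integrable_subinterval_real[OF i] b by auto
  moreover have "integral {b..a} h \<le> integral {b..a} (\<lambda>_. h a)"
    apply (rule integral_le)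
    using \<open>h integrable_on {b..a}\<close> apply auto
    using mono a b by (auto intro!: mono_onD[OF mono])
  ultimately show ?thesis using False by (simp add: algebra_simps)
qed

lemma envelope:
  fixes h U :: "real \<Rightarrow> real"
  assumes mono: "mono_on {0..1} h"
    and env: "\<forall>a\<in>{0..1}. \<forall>b\<in>{0..1}. U b - U a \<ge> (b - a) * h a"
    and v: "v \<in> {0..1}"
  shows "U v = U 0 + integral {0..v} h"
proof -
  define g where "g x = U x - integral {0..x} h" for x
  have D: "\<bar>g b - g a\<bar> \<le> (b - a) * (h b - h a)"
    if "a \<in> {0..1}" "b \<in> {0..1}" "a \<le> b" for a b
  proof -
    have 1: "integral {0..b} h - integral {0..a} h \<ge> (b - a) * h a"
      using int_diff_ge[OF mono that(1,2)] .
    have 2: "integral {0..a} h - integral {0..b} h \<ge> (a - b) * h b"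
      using int_diff_ge[OF mono that(2,1)] .
    have 3: "U b - U a \<ge> (b - a) * h a" "U a - U b \<ge> (a - b) * h b"
      using env that by auto
    show ?thesis using 1 2 3 unfolding g_def by (auto simp: algebra_simps abs_le_iff)
  qed
  have T: "\<bar>g (real m * v / real n) - g 0\<bar> \<le> (v / real n) * (h (real m * v / real n) - h 0)"
    if n: "n > 0" and "m \<le> n" for n m
    using that(2)
  proof (induction m)
    case 0
    then show ?case by simp
  next
    case (Suc m)
    have a1: "v * real m \<le> 1 * real m" "v * real (Suc m) \<le> 1 * real (Suc m)"
      using v by (intro mult_right_mono; simp)+
    have xm: "real m * v / real n \<in> {0..1}" and xs: "real (Suc m) * v / real n \<in> {0..1}"
      using Suc.prems v n a1 by (auto simp: field_simps)
    have le: "real m * v / real n \<le> real (Suc m) * v / real n"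
      using v n by (auto simp: field_simps)
    have diff: "real (Suc m) * v / real n - real m * v / real n = v / real n"
      by (simp add: add_divide_distrib distrib_right)
    have "\<bar>g (real (Suc m) * v / real n) - g (real m * v / real n)\<bar>
        \<le> (v / real n) * (h (real (Suc m) * v / real n) - h (real m * v / real n))"
      using D[OF xm xs le] diff by simp
    moreover have "\<bar>g (real m * v / real n) - g 0\<bar> \<le> (v / real n) * (h (real m * v / real n) - h 0)"
      using Suc by simp
    ultimately show ?case by (simp add: algebra_simps abs_le_iff)
  qed
  define C where "C = v * (h v - h 0)"
  have C0: "C \<ge> 0"
    unfolding C_def using v by (auto intro!: mult_nonneg_nonneg mono_onD[OF mono])
  have bound: "\<bar>g v - g 0\<bar> \<le> C / real n" if "n > 0" for n :: nat
    using T[OF that order.refl] that by (simp add: C_def)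
  have "g v = g 0"
  proof (rule ccontr)
    assume "g v \<noteq> g 0"
    then have d: "\<bar>g v - g 0\<bar> > 0" by simp
    obtain n :: nat where n: "C / \<bar>g v - g 0\<bar> < real n" using reals_Archimedean2 by blast
    have npos: "n > 0" using n C0 d
      by (metis divide_nonneg_pos gr0I not_less of_nat_0)
    have "C < \<bar>g v - g 0\<bar> * real n" using n d by (simp add: field_simps)
    then have "C / real n < \<bar>g v - g 0\<bar>" using npos by (simp add: field_simps)
    with bound[OF npos] show False by simp
  qed
  then show ?thesis unfolding g_def by simp
qed


theorem proposition3:
  fixes f1 f2 p :: "real \<Rightarrow> real \<Rightarrow> real"
  assumes mech: "mechanism f1 f2"
    and lin: "\<forall>v\<in>typesV. \<forall>k\<in>typesK. f1 v k = k * f2 v k"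
  shows "incentive_compatible f1 f2 p \<longleftrightarrow>
    (\<forall>v\<in>typesV. \<forall>k\<in>typesK.
       (\<forall>v'\<in>typesV. v' > v \<longrightarrow> f2 v k \<le> f2 v' k) \<and>
       p v k = p 0 1 + v * f2 v k - integral {0..v} (\<lambda>t. f2 t k) \<and>
       (\<forall>k'\<in>typesK. k' > k \<longrightarrow>
          integral {0..v} (\<lambda>t. f2 t k') \<le> integral {0..v} (\<lambda>t. f2 t k)) \<and>
       (\<forall>k'\<in>typesK. k' > k \<longrightarrow>
          integral {0..v * k / k'} (\<lambda>t. f2 t k) \<le> integral {0..v} (\<lambda>t. f2 t k')))"
proof -
  have nn: "0 \<le> f2 v k" if "v \<in> {0..1}" "k \<in> {0<..1}" for v k
    using mech that unfolding mechanism_def typesV_def typesK_def by auto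
  have lin': "f1 v k = k * f2 v k" if "v \<in> {0..1}" "k \<in> {0<..1}" for v k
    using lin that unfolding typesV_def typesK_def by auto
  have uhi: "utility v k (f1 w k') (f2 w k') (p w k') = v * f2 w k' - p w k'"
    if "w \<in> {0..1}" "k \<in> {0<..1}" "k' \<in> {0<..1}" "k \<le> k'" for v k w k'
  proof -
    have "f2 w k' \<le> k' * f2 w k' / k"
      using that nn[OF that(1,3)] by (auto simp: field_simps intro: mult_right_mono)
    then show ?thesis using lin'[OF that(1,3)] unfolding utility_def by (simp add: min_def)
  qed
  have ulo: "utility v k (f1 w k') (f2 w k') (p w k') = v * (k' / k * f2 w k') - p w k'"
    if "w \<in> {0..1}" "k \<in> {0<..1}" "k' \<in> {0<..1}" "k' \<le> k" for v k w k'
  proof -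
    have "k' * f2 w k' / k \<le> f2 w k'"
      using that nn[OF that(1,3)] by (auto simp: field_simps intro: mult_right_mono)
    then show ?thesis using lin'[OF that(1,3)] unfolding utility_def by (simp add: min_def)
  qed
  show ?thesis
  proof
    assume ic: "incentive_compatible f1 f2 p"
    have icr: "utility v k (f1 w k') (f2 w k') (p w k') \<le> utility v k (f1 v k) (f2 v k) (p v k)"
      if "v \<in> {0..1}" "k \<in> {0<..1}" "w \<in> {0..1}" "k' \<in> {0<..1}" for v k w k'
      using ic that unfolding incentive_compatible_def typesV_def typesK_def by blast
    have own: "utility v k (f1 v k) (f2 v k) (p v k) = v * f2 v k - p v k"
      if "v \<in> {0..1}" "k \<in> {0<..1}" for v k
      using uhi[OF that that(2) order.refl] .
    have env: "(b * f2 b k - p b k) - (a * f2 a k - p a k) \<ge> (b - a) * f2 a k"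
      if k: "k \<in> {0<..1}" and a: "a \<in> {0..1}" and b: "b \<in> {0..1}" for k a b
    proof -
      have "b * f2 a k - p a k \<le> b * f2 b k - p b k"
        using icr[OF b k a k] own[OF b k] uhi[OF a k k order.refl] by simp
      then show ?thesis by (simp add: algebra_simps)
    qed
    have mono: "mono_on {0..1} (\<lambda>t. f2 t k)" if k: "k \<in> {0<..1}" for k
    proof (intro mono_onI)
      fix a b :: real assume a: "a \<in> {0..1}" and b: "b \<in> {0..1}" and ab: "a \<le> b"
      show "f2 a k \<le> f2 b k"
      proof (cases "a = b")
        case True then show ?thesis by simp
      next
        case False
        have "(b - a) * f2 a k \<le> (b - a) * f2 b k"
          using env[OF k a b] env[OF k b a] by (simp add: algebra_simps)
        then show ?thesis using False ab by (simp add: mult_le_cancel_left)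
      qed
    qed
    have p0: "p 0 k = p 0 1" if k: "k \<in> {0<..1}" for k
      using icr[of 0 k 0 1] icr[of 0 1 0 k] k unfolding utility_def by auto
    have pay: "p v k = p 0 1 + v * f2 v k - integral {0..v} (\<lambda>t. f2 t k)"
      if v: "v \<in> {0..1}" and k: "k \<in> {0<..1}" for v k
    proof -
      have "(\<lambda>x. x * f2 x k - p x k) v = (\<lambda>x. x * f2 x k - p x k) 0 + integral {0..v} (\<lambda>t. f2 t k)"
        by (rule envelope[OF mono[OF k]]) (use env[OF k] v in auto)
      then show ?thesis using p0[OF k] by simp
    qed
    show "\<forall>v\<in>typesV. \<forall>k\<in>typesK.
       (\<forall>v'\<in>typesV. v' > v \<longrightarrow> f2 v k \<le> f2 v' k) \<and>
       p v k = p 0 1 + v * f2 v k - integral {0..v} (\<lambda>t. f2 t k) \<and>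
       (\<forall>k'\<in>typesK. k' > k \<longrightarrow>
          integral {0..v} (\<lambda>t. f2 t k') \<le> integral {0..v} (\<lambda>t. f2 t k)) \<and>
       (\<forall>k'\<in>typesK. k' > k \<longrightarrow>
          integral {0..v * k / k'} (\<lambda>t. f2 t k) \<le> integral {0..v} (\<lambda>t. f2 t k'))"
      unfolding typesV_def typesK_def
    proof (intro ballI conjI allI impI)
      fix v k assume v: "v \<in> {0::real..1}" and k: "k \<in> {0::real<..1}"
      show "f2 v k \<le> f2 v' k" if "v' \<in> {0..1}" "v < v'" for v'
        using mono_onD[OF mono[OF k] v that(1)] that by simp
      show "p v k = p 0 1 + v * f2 v k - integral {0..v} (\<lambda>t. f2 t k)" using pay[OF v k] .
      show "integral {0..v} (\<lambda>t. f2 t k') \<le> integral {0..v} (\<lambda>t. f2 t k)"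
        if k': "k' \<in> {0<..1}" and kk: "k < k'" for k'
        using icr[OF v k v k'] own[OF v k] uhi[OF v k k'] kk pay[OF v k] pay[OF v k'] by simp
      show "integral {0..v * k / k'} (\<lambda>t. f2 t k) \<le> integral {0..v} (\<lambda>t. f2 t k')"
        if k': "k' \<in> {0<..1}" and kk: "k < k'" for k'
      proof -
        have w: "v * k / k' \<in> {0..1}"
        proof -
          have "v * k \<le> 1 * k'" using v k kk by (intro mult_mono) auto
          then show ?thesis using v k k' by (auto simp: field_simps)
        qed
        have eq: "v * (k / k' * f2 (v * k / k') k) = (v * k / k') * f2 (v * k / k') k" by simp
        show ?thesis
          using icr[OF v k' w k] own[OF v k'] ulo[OF w k' k] kk pay[OF w k] pay[OF v k'] eq
          by simp
      qed
    qed
  next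
    assume R: "\<forall>v\<in>typesV. \<forall>k\<in>typesK.
       (\<forall>v'\<in>typesV. v' > v \<longrightarrow> f2 v k \<le> f2 v' k) \<and>
       p v k = p 0 1 + v * f2 v k - integral {0..v} (\<lambda>t. f2 t k) \<and>
       (\<forall>k'\<in>typesK. k' > k \<longrightarrow>
          integral {0..v} (\<lambda>t. f2 t k') \<le> integral {0..v} (\<lambda>t. f2 t k)) \<and>
       (\<forall>k'\<in>typesK. k' > k \<longrightarrow>
          integral {0..v * k / k'} (\<lambda>t. f2 t k) \<le> integral {0..v} (\<lambda>t. f2 t k'))"
    have R': "(\<forall>v'\<in>{0..1}. v' > v \<longrightarrow> f2 v k \<le> f2 v' k) \<and>
       p v k = p 0 1 + v * f2 v k - integral {0..v} (\<lambda>t. f2 t k) \<and>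
       (\<forall>k'\<in>{0<..1}. k' > k \<longrightarrow>
          integral {0..v} (\<lambda>t. f2 t k') \<le> integral {0..v} (\<lambda>t. f2 t k)) \<and>
       (\<forall>k'\<in>{0<..1}. k' > k \<longrightarrow>
          integral {0..v * k / k'} (\<lambda>t. f2 t k) \<le> integral {0..v} (\<lambda>t. f2 t k'))"
      if "v \<in> {0..1}" "k \<in> {0<..1}" for v k
      using R that unfolding typesV_def typesK_def by blast
    have mono: "mono_on {0..1} (\<lambda>t. f2 t k)" if k: "k \<in> {0<..1}" for k
    proof (intro mono_onI)
      fix a b :: real assume a: "a \<in> {0..1}" and b: "b \<in> {0..1}" and ab: "a \<le> b"
      show "f2 a k \<le> f2 b k"
      proof (cases "a = b")
        case True then show ?thesis by simp
      next
        case False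
        then have "a < b" using ab by simp
        then show ?thesis using R'[OF a k] b by blast
      qed
    qed
    have pay: "p v k = p 0 1 + v * f2 v k - integral {0..v} (\<lambda>t. f2 t k)"
      if "v \<in> {0..1}" "k \<in> {0<..1}" for v k
      using R'[OF that] by blast
    have c3: "integral {0..v} (\<lambda>t. f2 t k') \<le> integral {0..v} (\<lambda>t. f2 t k)"
      if "v \<in> {0..1}" "k \<in> {0<..1}" "k' \<in> {0<..1}" "k < k'" for v k k'
      using R'[OF that(1,2)] that(3,4) by blast
    have c4: "integral {0..v * k / k'} (\<lambda>t. f2 t k) \<le> integral {0..v} (\<lambda>t. f2 t k')"
      if "v \<in> {0..1}" "k \<in> {0<..1}" "k' \<in> {0<..1}" "k < k'" for v k k'
      using R'[OF that(1,2)] that(3,4) by blast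
    have key: "u * f2 w k - p w k \<le> integral {0..u} (\<lambda>t. f2 t k) - p 0 1"
      if k: "k \<in> {0<..1}" and u: "u \<in> {0..1}" and w: "w \<in> {0..1}" for k u w
      using int_diff_ge[OF mono[OF k] w u] pay[OF w k] by (simp add: algebra_simps)
    show "incentive_compatible f1 f2 p"
      unfolding incentive_compatible_def typesV_def typesK_def
    proof (intro ballI)
      fix v k w k' assume v: "v \<in> {0::real..1}" and k: "k \<in> {0::real<..1}"
        and w: "w \<in> {0::real..1}" and k': "k' \<in> {0::real<..1}"
      have own: "utility v k (f1 v k) (f2 v k) (p v k) = integral {0..v} (\<lambda>t. f2 t k) - p 0 1"
        using uhi[OF v k k order.refl] pay[OF v k] by simp
      show "utility v k (f1 w k') (f2 w k') (p w k') \<le> utility v k (f1 v k) (f2 v k) (p v k)"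
      proof (cases "k \<le> k'")
        case True
        have "integral {0..v} (\<lambda>t. f2 t k') \<le> integral {0..v} (\<lambda>t. f2 t k)"
          using c3[OF v k k'] True by (cases "k = k'") auto
        then show ?thesis using uhi[OF w k k' True] key[OF k' v w] own by simp
      next
        case False
        have u: "v * k' / k \<in> {0..1}"
        proof -
          have "v * k' \<le> 1 * k" using v k k' False by (intro mult_mono) auto
          then show ?thesis using v k k' by (auto simp: field_simps)
        qed
        have eq: "v * (k' / k * f2 w k') = (v * k' / k) * f2 w k'" by simp
        show ?thesis
          using ulo[OF w k k'] False key[OF k' u w] c4[OF v k' k] own eq by simp
      qed
    qed
  qed
qed

end
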